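(* Let $\alpha,\mu,\nu,\theta,\beta>0$ with $\varrho=\alpha/\mu<1$, let $(N(\infty),M(\infty))$ be distributed according to the stationary distribution of the two-class Processor-Sharing process described in the context, and let $\mathrm{F}_A(u,v)=\mathbb{E}\big(u^{N(\infty)}v^{M(\infty)}\big)$ for $(u,v)\in\mathbb{D}\times\mathbb{D}$, $\mathbb{D}$ the open unit disk. Then $\mathrm{F}_A$ extends analytically to the domain $\mathbb{D}(0,1/\varrho)\times\mathbb{C}$, where $\mathbb{D}(0,1/\varrho)$ is the open disk of center $0$ and radius $1/\varrho$ (indeed the power series defining $\mathrm{F}_A$ converges on this domain).
   Context: $(N,M)$ is the continuous-time Markov process on $\mathbb{N}^2$ with transitions $(n,m)\to(n+1,m)$ at rate $\alpha$, $(n,m)\to(n,m+1)$ at rate $\beta$, $(n,m)\to(n-1,m)$ at rate $\mu n/(n+m)$, $(n,m)\to(n,m-1)$ at rate $\nu m/(n+m)+\theta m$ (convention $0/0=0$); it models a Processor-Sharing queue with patient and impatient customers and has a stationary distribution iff $\varrho<1$. $A=\beta/\theta$. *)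

theory Defs
  imports "HOL-Analysis.Analysis"
begin

text \<open>Transition rates of the two-class Processor-Sharing process on states (n,m).
  Division by zero yields 0 in Isabelle, matching the convention 0/0 = 0.\<close>
definition ps_rate :: "real \<Rightarrow> real \<Rightarrow> real \<Rightarrow> real \<Rightarrow> real \<Rightarrow>
    nat \<times> nat \<Rightarrow> nat \<times> nat \<Rightarrow> real" where
  "ps_rate \<alpha> \<beta> \<mu> \<nu> \<theta> x y =
     (let n = fst x; m = snd x; n' = fst y; m' = snd y in
      if n' = Suc n \<and> m' = m then \<alpha>
      else if n' = n \<and> m' = Suc m then \<beta>
      else if Suc n' = n \<and> m' = m then \<mu> * real n / real (n + m)
      else if n' = n \<and> Suc m' = m then \<nu> * real m / real (n + m) + \<theta> * real m
      else 0)"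

definition is_stationary_dist :: "('s \<Rightarrow> 's \<Rightarrow> real) \<Rightarrow> ('s \<Rightarrow> real) \<Rightarrow> bool" where
  "is_stationary_dist q p \<longleftrightarrow>
     (\<forall>x. 0 \<le> p x) \<and> (p has_sum 1) UNIV \<and>
     (\<forall>x. p x * (\<Sum>\<^sub>\<infinity>y\<in>-{x}. q x y) = (\<Sum>\<^sub>\<infinity>y\<in>-{x}. p y * q y x))"

definition gen_fun :: "(nat \<times> nat \<Rightarrow> real) \<Rightarrow> complex \<Rightarrow> complex \<Rightarrow> complex" where
  "gen_fun p u v = (\<Sum>\<^sub>\<infinity>(n,m)\<in>UNIV. complex_of_real (p (n,m)) * u ^ n * v ^ m)"

end

theory Submission
  imports Defs
begin



lemma infsum_support_finite:
  fixes f :: "'a \<Rightarrow> real"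
  assumes "finite S" "\<And>y. y \<notin> S \<Longrightarrow> f y = 0"
  shows "infsum f A = sum f (S \<inter> A)"
proof -
  have "infsum f A = infsum f (S \<inter> A)"
    by (rule infsum_cong_neutral) (use assms in auto)
  also have "\<dots> = sum f (S \<inter> A)" using assms by simp
  finally show ?thesis .
qed

locale psq =
  fixes \<alpha> \<beta> \<mu> \<nu> \<theta> :: real and p :: "nat \<times> nat \<Rightarrow> real"
  assumes pos: "\<alpha> > 0" "\<beta> > 0" "\<mu> > 0" "\<nu> > 0" "\<theta> > 0"
    and rho: "\<alpha> / \<mu> < 1"
    and stat: "is_stationary_dist (ps_rate \<alpha> \<beta> \<mu> \<nu> \<theta>) p"
begin

definition D :: "nat \<Rightarrow> nat \<Rightarrow> real" where "D n m = \<mu> * real n / real (n + m)"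
definition E :: "nat \<Rightarrow> nat \<Rightarrow> real" where "E n m = \<nu> * real m / real (n + m) + \<theta> * real m"

lemma out_rate: "(\<Sum>\<^sub>\<infinity>y\<in>-{(n,m)}. ps_rate \<alpha> \<beta> \<mu> \<nu> \<theta> (n,m) y) = \<alpha> + \<beta> + D n m + E n m"
proof -
  let ?S = "{(Suc n, m), (n, Suc m), (n - 1, m), (n, m - 1)}"
  have "(\<Sum>\<^sub>\<infinity>y\<in>-{(n,m)}. ps_rate \<alpha> \<beta> \<mu> \<nu> \<theta> (n,m) y) = sum (ps_rate \<alpha> \<beta> \<mu> \<nu> \<theta> (n,m)) (?S \<inter> -{(n,m)})"
    by (rule infsum_support_finite) (auto simp: ps_rate_def Let_def)
  also have "\<dots> = \<alpha> + \<beta> + D n m + E n m"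
    by (cases n; cases m) (auto simp: ps_rate_def D_def E_def Let_def insert_Diff_if Int_insert_left)
  finally show ?thesis .
qed

lemma in_rate: "(\<Sum>\<^sub>\<infinity>y\<in>-{(n,m)}. p y * ps_rate \<alpha> \<beta> \<mu> \<nu> \<theta> y (n,m)) =
   (if n > 0 then \<alpha> * p (n - 1, m) else 0) + (if m > 0 then \<beta> * p (n, m - 1) else 0)
   + D (Suc n) m * p (Suc n, m) + E n (Suc m) * p (n, Suc m)"
proof -
  let ?S = "{(Suc n, m), (n, Suc m), (n - 1, m), (n, m - 1)}"
  have "(\<Sum>\<^sub>\<infinity>y\<in>-{(n,m)}. p y * ps_rate \<alpha> \<beta> \<mu> \<nu> \<theta> y (n,m)) = sum (\<lambda>y. p y * ps_rate \<alpha> \<beta> \<mu> \<nu> \<theta> y (n,m)) (?S \<inter> -{(n,m)})"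
    by (rule infsum_support_finite) (auto simp: ps_rate_def Let_def)
  also have "\<dots> = (if n > 0 then \<alpha> * p (n - 1, m) else 0) + (if m > 0 then \<beta> * p (n, m - 1) else 0)
   + D (Suc n) m * p (Suc n, m) + E n (Suc m) * p (n, Suc m)"
    by (cases n; cases m) (auto simp: ps_rate_def D_def E_def Let_def insert_Diff_if Int_insert_left algebra_simps)
  finally show ?thesis .
qed

lemma balance: "p (n,m) * (\<alpha> + \<beta> + D n m + E n m) =
   (if n > 0 then \<alpha> * p (n - 1, m) else 0) + (if m > 0 then \<beta> * p (n, m - 1) else 0)
   + D (Suc n) m * p (Suc n, m) + E n (Suc m) * p (n, Suc m)"
  using stat unfolding is_stationary_dist_def by (metis out_rate in_rate)

end



context psq begin

lemma p_nonneg: "p x \<ge> 0" using stat unfolding is_stationary_dist_def by (cases x) auto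
lemma p_summable: "p summable_on UNIV" using stat unfolding is_stationary_dist_def summable_on_def by auto

lemma D_nonneg: "D n m \<ge> 0" using pos by (simp add: D_def)
lemma E_nonneg: "E n m \<ge> 0" using pos by (simp add: E_def)
lemma D_le: "D n m \<le> \<mu>"
  using pos by (cases "n + m = 0") (auto simp: D_def field_simps)
lemma E_le: "E n m \<le> \<nu> + \<theta> * real m"
proof -
  have "\<nu> * real m / real (n + m) \<le> \<nu>"
    using pos by (cases "n + m = 0") (auto simp: field_simps)
  thus ?thesis by (simp add: E_def)
qed
lemma E_ge: "E n m \<ge> \<theta> * real m"
  using pos by (simp add: E_def)
lemma D0[simp]: "D 0 m = 0" by (simp add: D_def)
lemma E0[simp]: "E n 0 = 0" by (simp add: E_def)

lemma row_summable: "summable (\<lambda>n. p (n, m))"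
proof -
  have "p summable_on range (\<lambda>n. (n, m))"
    by (rule summable_on_subset[OF p_summable]) auto
  hence "(p \<circ> (\<lambda>n. (n, m))) summable_on UNIV"
    by (subst summable_on_reindex[symmetric]) (auto simp: inj_on_def)
  thus ?thesis using summable_on_UNIV_nonneg_real_iff p_nonneg by (simp add: o_def)
qed

lemma col_summable: "summable (\<lambda>m. p (n, m))"
proof -
  have "p summable_on range (\<lambda>m. (n, m))"
    by (rule summable_on_subset[OF p_summable]) auto
  hence "(p \<circ> (\<lambda>m. (n, m))) summable_on UNIV"
    by (subst summable_on_reindex[symmetric]) (auto simp: inj_on_def)
  thus ?thesis using summable_on_UNIV_nonneg_real_iff p_nonneg by (simp add: o_def)
qed

definition b :: "nat \<Rightarrow> real" where "b m = (\<Sum>n. p (n, m))"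
definition a :: "nat \<Rightarrow> real" where "a n = (\<Sum>m. p (n, m))"
definition e :: "nat \<Rightarrow> real" where "e m = (\<Sum>n. E n m * p (n, m))"
definition dd :: "nat \<Rightarrow> real" where "dd n = (\<Sum>m. D n m * p (n, m))"

lemma b_nonneg: "b m \<ge> 0" unfolding b_def by (rule suminf_nonneg[OF row_summable p_nonneg])
lemma a_nonneg: "a n \<ge> 0" unfolding a_def by (rule suminf_nonneg[OF col_summable p_nonneg])

lemma p_le_b: "p (n, m) \<le> b m"
  unfolding b_def using sum_le_suminf[OF row_summable, of "{n}" m] p_nonneg by auto

lemma rowD_summable: "summable (\<lambda>n. D n m * p (n, m))"
  by (rule summable_comparison_test'[of "\<lambda>n. \<mu> * p (n, m)"])
     (auto intro!: summable_mult row_summable mult_right_mono simp: D_nonneg p_nonneg D_le)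

lemma rowE_summable: "summable (\<lambda>n. E n m * p (n, m))"
  by (rule summable_comparison_test'[of "\<lambda>n. (\<nu> + \<theta> * real m) * p (n, m)"])
     (auto intro!: summable_mult row_summable mult_right_mono simp: E_nonneg p_nonneg E_le)

lemma row_eq: "\<beta> * b m + e m = (if m > 0 then \<beta> * b (m - 1) else 0) + e (Suc m)"
proof -
  have sl: "summable (\<lambda>n. p (n,m) * (\<alpha> + \<beta> + D n m + E n m))"
    using summable_add[OF summable_add[OF summable_mult2[OF row_summable, of m "\<alpha> + \<beta>"] rowD_summable] rowE_summable]
    by (simp add: algebra_simps)
  have "(\<Sum>n. p (n,m) * (\<alpha> + \<beta> + D n m + E n m)) = (\<alpha> + \<beta>) * b m + dd' + e m"
    if "dd' = (\<Sum>n. D n m * p (n, m))" for dd'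
  proof -
    have "(\<Sum>n. p (n,m) * (\<alpha> + \<beta> + D n m + E n m)) =
       (\<Sum>n. (\<alpha> + \<beta>) * p (n,m) + D n m * p (n, m) + E n m * p (n, m))"
      by (simp add: algebra_simps)
    also have "\<dots> = (\<Sum>n. (\<alpha> + \<beta>) * p (n,m)) + (\<Sum>n. D n m * p (n, m)) + (\<Sum>n. E n m * p (n, m))"
      by (subst suminf_add[symmetric], (intro summable_add summable_mult row_summable rowD_summable rowE_summable)+)
         (subst suminf_add[symmetric], (intro summable_add summable_mult row_summable rowD_summable rowE_summable)+, simp)
    finally show ?thesis using that by (simp add: b_def e_def suminf_mult[OF row_summable])
  qed
  note L = this[OF refl]
  define f1 where "f1 n = (if n > 0 then \<alpha> * p (n - 1, m) else 0)" for n
  have s1: "summable f1"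
  proof -
    have "summable (\<lambda>n. f1 (Suc n))" by (simp add: f1_def summable_mult row_summable)
    thus ?thesis by (simp add: summable_Suc_iff)
  qed
  have e1: "suminf f1 = \<alpha> * b m"
    using suminf_split_head[OF s1] by (simp add: f1_def b_def suminf_mult[OF row_summable])
  have s3: "summable (\<lambda>n. D (Suc n) m * p (Suc n, m))"
    using rowD_summable[of m] by (simp add: summable_Suc_iff[where f="\<lambda>n. D n m * p (n, m)"])
  have e3: "(\<Sum>n. D (Suc n) m * p (Suc n, m)) = (\<Sum>n. D n m * p (n, m))"
    using suminf_split_head[OF rowD_summable[of m]] by simp
  have s2: "summable (\<lambda>n. (if m > 0 then \<beta> * p (n, m - 1) else 0))"
    by (cases "m > 0") (auto intro: summable_mult row_summable)
  have e2: "(\<Sum>n. (if m > 0 then \<beta> * p (n, m - 1) else 0)) = (if m > 0 then \<beta> * b (m - 1) else 0)"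
    by (cases "m > 0") (auto simp: b_def suminf_mult[OF row_summable])
  have "(\<Sum>n. p (n,m) * (\<alpha> + \<beta> + D n m + E n m)) =
     (\<Sum>n. f1 n + (if m > 0 then \<beta> * p (n, m - 1) else 0) + D (Suc n) m * p (Suc n, m) + E n (Suc m) * p (n, Suc m))"
    using balance by (simp add: f1_def)
  also have "\<dots> = suminf f1 + (\<Sum>n. (if m > 0 then \<beta> * p (n, m - 1) else 0)) + (\<Sum>n. D (Suc n) m * p (Suc n, m)) + e (Suc m)"
    unfolding e_def
    by (subst suminf_add[symmetric], (intro summable_add s1 s2 s3 rowE_summable)+)
       (subst suminf_add[symmetric], (intro summable_add s1 s2 s3 rowE_summable)+,
        subst suminf_add[symmetric], (intro summable_add s1 s2 s3 rowE_summable)+, simp)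
  finally show ?thesis using L e1 e2 e3 by (simp add: algebra_simps)
qed

lemma e_Suc: "e (Suc m) = \<beta> * b m"
proof (induction m)
  case 0 thus ?case using row_eq[of 0] by (simp add: e_def)
next
  case (Suc m) thus ?case using row_eq[of "Suc m"] by simp
qed

lemma b_rec: "\<theta> * real (Suc m) * b (Suc m) \<le> \<beta> * b m"
proof -
  have "\<theta> * real (Suc m) * b (Suc m) = (\<Sum>n. \<theta> * real (Suc m) * p (n, Suc m))"
    by (simp add: b_def suminf_mult row_summable)
  also have "\<dots> \<le> e (Suc m)" unfolding e_def
    by (intro suminf_le summable_mult row_summable rowE_summable mult_right_mono E_ge p_nonneg)
  finally show ?thesis using e_Suc by simp
qed

end



context psq begin

lemma bW_summable:
  assumes W: "W \<ge> 0"
  shows "summable (\<lambda>m. b m * W ^ m)"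
proof -
  obtain N :: nat where N: "real N \<ge> 2 * \<beta> * W / \<theta>" using real_arch_simple by blast
  show ?thesis
  proof (rule summable_ratio_test[of "1/2" N])
    fix m assume "m \<ge> N"
    hence mN: "real (Suc m) \<ge> 2 * \<beta> * W / \<theta>" using N by simp
    have th: "\<theta> * real (Suc m) \<ge> 2 * \<beta> * W" using mN pos by (simp add: field_simps)
    have "\<theta> * real (Suc m) * (b (Suc m) * W ^ Suc m) \<le> \<beta> * b m * W ^ Suc m"
      using b_rec[of m] W by (simp add: mult_right_mono mult.assoc[symmetric])
    also have "\<dots> = (\<beta> * W) * (b m * W ^ m)" by simp
    also have "\<dots> \<le> (\<theta> * real (Suc m) / 2) * (b m * W ^ m)"
      by (rule mult_right_mono) (use th b_nonneg W in auto)
    finally have "\<theta> * real (Suc m) * (b (Suc m) * W ^ Suc m) \<le> \<theta> * real (Suc m) * (1/2 * (b m * W ^ m))"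
      by simp
    hence "b (Suc m) * W ^ Suc m \<le> 1/2 * (b m * W ^ m)"
      using pos by (simp add: mult_le_cancel_left_pos)
    thus "norm (b (Suc m) * W ^ Suc m) \<le> 1/2 * norm (b m * W ^ m)"
      using b_nonneg W by simp
  qed simp
qed

lemma colE_summable: "summable (\<lambda>m. E n m * p (n, m))"
proof (rule summable_comparison_test'[of "\<lambda>m. (\<nu> + \<theta>) * (b m * 2 ^ m)"])
  show "summable (\<lambda>m. (\<nu> + \<theta>) * (b m * 2 ^ m))" by (intro summable_mult bW_summable) simp
  fix m
  have "real m + 1 \<le> 2 ^ m"
    by (induction m) auto
  hence h: "\<theta> * (real m + 1) \<le> \<theta> * 2 ^ m" using pos by (intro mult_left_mono) auto
  have "(1::real) \<le> 2 ^ m" by simp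
  hence "\<nu> * 1 \<le> \<nu> * 2 ^ m" using pos by (intro mult_left_mono) auto
  hence "\<nu> + \<theta> * real m \<le> (\<nu> + \<theta>) * 2 ^ m" using h pos
    by (simp only: distrib_right distrib_left)
  hence "E n m * p (n, m) \<le> ((\<nu> + \<theta>) * 2 ^ m) * b m"
    using E_le[of n m] p_le_b[of n m] E_nonneg p_nonneg pos
    by (intro mult_mono) auto
  thus "norm (E n m * p (n, m)) \<le> (\<nu> + \<theta>) * (b m * 2 ^ m)"
    using E_nonneg p_nonneg by (simp add: algebra_simps)
qed

lemma colD_summable: "summable (\<lambda>m. D n m * p (n, m))"
  by (rule summable_comparison_test'[of "\<lambda>m. \<mu> * p (n, m)"])
     (auto intro!: summable_mult col_summable mult_right_mono simp: D_nonneg p_nonneg D_le)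

lemma col_eq: "\<alpha> * a n + dd n = (if n > 0 then \<alpha> * a (n - 1) else 0) + dd (Suc n)"
proof -
  have L: "(\<Sum>m. p (n,m) * (\<alpha> + \<beta> + D n m + E n m)) = (\<alpha> + \<beta>) * a n + dd n + (\<Sum>m. E n m * p (n, m))"
  proof -
    have "(\<Sum>m. p (n,m) * (\<alpha> + \<beta> + D n m + E n m)) =
       (\<Sum>m. (\<alpha> + \<beta>) * p (n,m) + D n m * p (n, m) + E n m * p (n, m))"
      by (simp add: algebra_simps)
    also have "\<dots> = (\<Sum>m. (\<alpha> + \<beta>) * p (n,m)) + (\<Sum>m. D n m * p (n, m)) + (\<Sum>m. E n m * p (n, m))"
      by (subst suminf_add[symmetric], (intro summable_add summable_mult col_summable colD_summable colE_summable)+)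
         (subst suminf_add[symmetric], (intro summable_add summable_mult col_summable colD_summable colE_summable)+, simp)
    finally show ?thesis by (simp add: a_def dd_def suminf_mult[OF col_summable])
  qed
  define f1 where "f1 m = (if m > 0 then \<beta> * p (n, m - 1) else 0)" for m
  have s1: "summable f1"
  proof -
    have "summable (\<lambda>m. f1 (Suc m))" by (simp add: f1_def summable_mult col_summable)
    thus ?thesis by (simp add: summable_Suc_iff)
  qed
  have e1: "suminf f1 = \<beta> * a n"
    using suminf_split_head[OF s1] by (simp add: f1_def a_def suminf_mult[OF col_summable])
  have s3: "summable (\<lambda>m. E n (Suc m) * p (n, Suc m))"
    using colE_summable[of n] by (simp add: summable_Suc_iff[where f="\<lambda>m. E n m * p (n, m)"])
  have e3: "(\<Sum>m. E n (Suc m) * p (n, Suc m)) = (\<Sum>m. E n m * p (n, m))"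
    using suminf_split_head[OF colE_summable[of n]] by simp
  have s2: "summable (\<lambda>m. (if n > 0 then \<alpha> * p (n - 1, m) else 0))"
    by (cases "n > 0") (auto intro: summable_mult col_summable)
  have e2: "(\<Sum>m. (if n > 0 then \<alpha> * p (n - 1, m) else 0)) = (if n > 0 then \<alpha> * a (n - 1) else 0)"
    by (cases "n > 0") (auto simp: a_def suminf_mult[OF col_summable])
  have "(\<Sum>m. p (n,m) * (\<alpha> + \<beta> + D n m + E n m)) =
     (\<Sum>m. (if n > 0 then \<alpha> * p (n - 1, m) else 0) + f1 m + D (Suc n) m * p (Suc n, m) + E n (Suc m) * p (n, Suc m))"
    using balance by (simp add: f1_def)
  also have "\<dots> = (\<Sum>m. (if n > 0 then \<alpha> * p (n - 1, m) else 0)) + suminf f1 + dd (Suc n) + (\<Sum>m. E n (Suc m) * p (n, Suc m))"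
    unfolding dd_def
    by (subst suminf_add[symmetric], (intro summable_add s1 s2 s3 colD_summable)+)
       (subst suminf_add[symmetric], (intro summable_add s1 s2 s3 colD_summable)+,
        subst suminf_add[symmetric], (intro summable_add s1 s2 s3 colD_summable)+, simp)
  finally show ?thesis using L e1 e2 e3 by (simp add: algebra_simps)
qed

lemma dd_Suc: "dd (Suc n) = \<alpha> * a n"
proof (induction n)
  case 0 thus ?case using col_eq[of 0] by (simp add: dd_def)
next
  case (Suc n) thus ?case using col_eq[of "Suc n"] by simp
qed

end



lemma frac_bound:
  fixes T :: real and j k m :: nat
  assumes "j \<ge> 1" "T \<ge> 1" "k \<ge> 1"
  shows "real m / real (k + m) \<le> 1 / real j + (T ^ j) ^ m / T ^ k"
proof (cases "m * j < k")
  case True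
  have "real m / real (k + m) \<le> real m / real k"
    using assms by (intro divide_left_mono) auto
  also have "\<dots> \<le> 1 / real j"
  proof -
    have "real m * real j \<le> real k" using True by (metis of_nat_le_iff of_nat_mult less_imp_le)
    thus ?thesis using assms by (simp add: field_simps)
  qed
  finally show ?thesis using assms by (smt (verit) divide_nonneg_nonneg zero_le_power)
next
  case False
  have "T ^ k \<le> T ^ (j * m)" using False assms by (intro power_increasing) (auto simp: mult.commute)
  hence "1 \<le> (T ^ j) ^ m / T ^ k" using assms by (simp add: power_mult)
  moreover have "real m / real (k + m) \<le> 1" using assms by (auto simp: divide_le_eq_1)
  moreover have "0 \<le> 1 / real j" by simp
  ultimately show ?thesis by linarith
qed

context psq begin

lemma a_rec:
  assumes j: "j \<ge> 1" and T: "T \<ge> 1"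
  shows "(1 - 1 / real j) * a (Suc n) \<le> (\<alpha> / \<mu>) * a n + (\<Sum>m. b m * (T ^ j) ^ m) / T ^ (Suc n)"
proof -
  define k where "k = Suc n"
  define W where "W = T ^ j"
  have W: "W \<ge> 0" using T by (simp add: W_def)
  have pt: "\<mu> * p (k, m) \<le> D k m * p (k, m) + (\<mu> / real j) * p (k, m) + (\<mu> / T ^ k) * (b m * W ^ m)" for m
  proof -
    have h: "real (k + m) > 0" by (simp add: k_def)
    have "D k m + \<mu> * (real m / real (k + m)) = \<mu> * (real (k + m) / real (k + m))"
      unfolding D_def by (simp only: add_divide_distrib[symmetric] times_divide_eq_right distrib_left[symmetric] of_nat_add)
    also have "\<dots> = \<mu>" using h by simp
    finally have "\<mu> * p (k, m) = (D k m + \<mu> * (real m / real (k + m))) * p (k, m)" by simp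
    hence "\<mu> * p (k, m) = D k m * p (k, m) + \<mu> * (real m / real (k + m)) * p (k, m)"
      by (simp add: algebra_simps)
    also have "\<mu> * (real m / real (k + m)) * p (k, m) \<le> \<mu> * (1 / real j + W ^ m / T ^ k) * p (k, m)"
      using frac_bound[OF j T, of k m] pos p_nonneg by (intro mult_right_mono mult_left_mono) (auto simp: k_def W_def)
    also have "\<dots> = (\<mu> / real j) * p (k, m) + (\<mu> / T ^ k) * (W ^ m * p (k, m))" by (simp add: field_simps)
    also have "(\<mu> / T ^ k) * (W ^ m * p (k, m)) \<le> (\<mu> / T ^ k) * (b m * W ^ m)"
      using p_le_b[of k m] W pos T by (intro mult_left_mono) (auto simp: mult.commute mult_left_mono)
    finally show ?thesis by simp
  qed
  have sR: "summable (\<lambda>m. D k m * p (k, m) + (\<mu> / real j) * p (k, m) + (\<mu> / T ^ k) * (b m * W ^ m))"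
    by (intro summable_add summable_mult colD_summable col_summable bW_summable W)
  have "\<mu> * a k = (\<Sum>m. \<mu> * p (k, m))" by (simp add: a_def suminf_mult[OF col_summable])
  also have "\<dots> \<le> (\<Sum>m. D k m * p (k, m) + (\<mu> / real j) * p (k, m) + (\<mu> / T ^ k) * (b m * W ^ m))"
    by (intro suminf_le pt summable_mult col_summable sR)
  also have "\<dots> = dd k + (\<mu> / real j) * a k + (\<mu> / T ^ k) * (\<Sum>m. b m * W ^ m)"
    unfolding dd_def a_def
    by (subst suminf_add[symmetric], (intro summable_add summable_mult colD_summable col_summable bW_summable W)+,
        subst suminf_add[symmetric], (intro summable_add summable_mult colD_summable col_summable bW_summable W)+)
       (simp only: suminf_mult[OF col_summable] suminf_mult[OF bW_summable[OF W]])
  finally have "\<mu> * a k \<le> \<alpha> * a n + (\<mu> / real j) * a k + (\<mu> / T ^ k) * (\<Sum>m. b m * W ^ m)"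
    using dd_Suc by (simp add: k_def)
  moreover have "\<mu> * ((1 - 1 / real j) * a k) = \<mu> * a k - (\<mu> / real j) * a k"
    by (simp add: algebra_simps)
  moreover have "\<mu> * ((\<alpha> / \<mu>) * a n + (\<Sum>m. b m * W ^ m) / T ^ k) = \<alpha> * a n + (\<mu> / T ^ k) * (\<Sum>m. b m * W ^ m)"
    using pos by (simp add: field_simps)
  ultimately have "\<mu> * ((1 - 1 / real j) * a k) \<le> \<mu> * ((\<alpha> / \<mu>) * a n + (\<Sum>m. b m * W ^ m) / T ^ k)"
    by linarith
  thus ?thesis using pos by (simp add: k_def W_def mult_le_cancel_left_pos)
qed

end



lemma geom_partial_le:
  fixes q :: real assumes "0 \<le> q" "q < 1"
  shows "(\<Sum>n<K. q ^ Suc n) \<le> 1 / (1 - q)"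
proof -
  have "(\<Sum>n<K. q ^ Suc n) \<le> (\<Sum>n<Suc K. q ^ n)"
    by (simp only: sum.lessThan_Suc_shift) (simp add: assms)
  also have "\<dots> \<le> (\<Sum>n. q ^ n)"
    by (rule sum_le_suminf) (use assms in \<open>auto intro: summable_geometric\<close>)
  also have "\<dots> = 1 / (1 - q)" using suminf_geometric[of q] assms by simp
  finally show ?thesis .
qed

context psq begin

lemma at_summable:
  assumes t0: "t \<ge> 0" and t1: "(\<alpha> / \<mu>) * t < 1"
  shows "summable (\<lambda>n. a n * t ^ n)"
proof -
  define \<rho> where "\<rho> = \<alpha> / \<mu>"
  have rho0: "\<rho> > 0" using pos by (simp add: \<rho>_def)
  obtain N :: nat where N: "real N \<ge> 1 / (1 - \<rho> * t)" using real_arch_simple by blast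
  define j where "j = Suc N"
  have j1: "j \<ge> 1" by (simp add: j_def)
  have pos1: "1 - \<rho> * t > 0" using t1 by (simp add: \<rho>_def)
  have jbig: "real j > 1 / (1 - \<rho> * t)" using N by (simp add: j_def)
  hence "1 < real j * (1 - \<rho> * t)" using pos1 by (simp add: divide_less_eq)
  hence "1 / real j < 1 - \<rho> * t" using j1 by (simp add: divide_less_eq mult.commute)
  define \<delta> where "\<delta> = 1 / real j"
  have gap: "1 - \<delta> - \<rho> * t > 0" using \<open>1 / real j < 1 - \<rho> * t\<close> by (simp add: \<delta>_def)
  have d0: "\<delta> \<ge> 0" by (simp add: \<delta>_def)
  have d1: "\<delta> \<le> 1" using j1 by (simp add: \<delta>_def)
  define T where "T = 2 * t + 1"
  have T1: "T \<ge> 1" using t0 by (simp add: T_def)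
  define q where "q = t / T"
  have q0: "q \<ge> 0" and q1: "q < 1" using t0 T1 by (auto simp: q_def T_def field_simps)
  define C where "C = (\<Sum>m. b m * (T ^ j) ^ m)"
  have C0: "C \<ge> 0" unfolding C_def using T1
    by (intro suminf_nonneg bW_summable) (auto intro!: mult_nonneg_nonneg b_nonneg)
  have step: "(1 - \<delta>) * (a (Suc n) * t ^ Suc n) \<le> (\<rho> * t) * (a n * t ^ n) + C * q ^ Suc n" for n
  proof -
    have "(1 - \<delta>) * a (Suc n) \<le> \<rho> * a n + C / T ^ Suc n"
      using a_rec[OF j1 T1, of n] by (simp add: \<rho>_def \<delta>_def C_def)
    hence "(1 - \<delta>) * a (Suc n) * t ^ Suc n \<le> (\<rho> * a n + C / T ^ Suc n) * t ^ Suc n"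
      using t0 by (intro mult_right_mono) auto
    also have "\<dots> = (\<rho> * t) * (a n * t ^ n) + C * q ^ Suc n"
      using T1 by (simp add: q_def power_divide field_simps)
    finally show ?thesis by (simp add: mult.assoc)
  qed
  define B where "B = ((1 - \<delta>) * a 0 + C / (1 - q)) / (1 - \<delta> - \<rho> * t)"
  have bound: "(\<Sum>n<K. a n * t ^ n) \<le> B" for K
  proof -
    let ?s = "\<lambda>K. (\<Sum>n<K. a n * t ^ n)"
    have mono: "?s K \<le> ?s (Suc K)" using a_nonneg t0 by simp
    have "(1 - \<delta>) * ?s (Suc K) = (1 - \<delta>) * a 0 + (\<Sum>n<K. (1 - \<delta>) * (a (Suc n) * t ^ Suc n))"
      by (simp only: sum.lessThan_Suc_shift) (simp add: sum_distrib_left algebra_simps)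
    also have "\<dots> \<le> (1 - \<delta>) * a 0 + (\<Sum>n<K. (\<rho> * t) * (a n * t ^ n) + C * q ^ Suc n)"
      by (intro add_left_mono sum_mono step)
    also have "\<dots> = (1 - \<delta>) * a 0 + (\<rho> * t) * ?s K + C * (\<Sum>n<K. q ^ Suc n)"
      by (simp add: sum.distrib sum_distrib_left)
    also have "\<dots> \<le> (1 - \<delta>) * a 0 + (\<rho> * t) * ?s (Suc K) + C * (1 / (1 - q))"
      using mono rho0 t0 C0 d1 geom_partial_le[OF q0 q1, of K]
      by (intro add_mono mult_left_mono) auto
    finally have "(1 - \<delta> - \<rho> * t) * ?s (Suc K) \<le> (1 - \<delta>) * a 0 + C / (1 - q)"
      by (simp add: algebra_simps)
    hence "?s (Suc K) \<le> B" using gap by (simp add: B_def field_simps)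
    thus ?thesis using mono by linarith
  qed
  show ?thesis
    by (rule summableI_nonneg_bounded[of _ B]) (use a_nonneg t0 bound in auto)
qed

end



lemma pow_split_bound:
  fixes r R t :: real
  assumes r0: "0 \<le> r" and rt: "max r 1 < t" and R0: "0 \<le> R"
  shows "\<exists>S \<ge> 0. \<forall>n m. r ^ n * R ^ m \<le> t ^ n + S ^ m"
proof -
  define r' where "r' = max r 1"
  define R' where "R' = max R 1"
  define q where "q = t / r'"
  have r'1: "r' \<ge> 1" by (simp add: r'_def)
  have q1: "q > 1" using rt r'1 by (simp add: q_def r'_def)
  obtain J where J: "R' < q ^ J" using real_arch_pow[OF q1] by blast
  define S where "S = r' ^ J * R'"
  have S0: "S \<ge> 0" using r'1 by (simp add: S_def R'_def)
  have "r ^ n * R ^ m \<le> t ^ n + S ^ m" for n m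
  proof -
    have rn: "r ^ n \<le> r' ^ n" using r0 by (intro power_mono) (auto simp: r'_def)
    have Rm: "R ^ m \<le> R' ^ m" using R0 by (intro power_mono) (auto simp: R'_def)
    have "r ^ n * R ^ m \<le> r' ^ n * R' ^ m"
      using rn Rm r0 R0 r'1 by (intro mult_mono) auto
    show ?thesis
    proof (cases "J * m \<le> n")
      case True
      have "R' ^ m \<le> (q ^ J) ^ m" using J by (intro power_mono) (auto simp: R'_def)
      also have "\<dots> = q ^ (J * m)" by (simp add: power_mult)
      also have "\<dots> \<le> q ^ n" using True q1 by (intro power_increasing) auto
      finally have "r' ^ n * R' ^ m \<le> r' ^ n * q ^ n" using r'1 by (intro mult_left_mono) auto
      also have "\<dots> = t ^ n" using r'1 by (simp add: q_def power_divide)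
      finally show ?thesis using \<open>r ^ n * R ^ m \<le> r' ^ n * R' ^ m\<close> S0 by (smt (verit) zero_le_power)
    next
      case False
      have "r' ^ n \<le> r' ^ (J * m)" using False r'1 by (intro power_increasing) auto
      hence "r' ^ n * R' ^ m \<le> r' ^ (J * m) * R' ^ m" by (intro mult_right_mono) (auto simp: R'_def)
      also have "\<dots> = S ^ m" by (simp add: S_def power_mult power_mult_distrib mult.commute)
      finally show ?thesis using \<open>r ^ n * R ^ m \<le> r' ^ n * R' ^ m\<close> rt r0
        by (smt (verit) zero_le_power)
    qed
  qed
  thus ?thesis using S0 by blast
qed

context psq begin

lemma sum_t:
  assumes t0: "t \<ge> 0" and t1: "(\<alpha> / \<mu>) * t < 1"
  shows "(\<lambda>(n,m). p (n,m) * t ^ n) summable_on UNIV"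
proof -
  have "(\<lambda>x. p x * t ^ fst x) summable_on Sigma UNIV (\<lambda>_. UNIV)"
  proof (rule summable_on_SigmaI)
    fix n :: nat
    have "(\<lambda>m. p (n,m) * t ^ n) sums (a n * t ^ n)"
      unfolding a_def by (intro sums_mult2 summable_sums col_summable)
    thus "((\<lambda>m. p (n,m) * t ^ fst (n, m)) has_sum a n * t ^ n) UNIV"
      using p_nonneg t0 by (auto intro!: sums_nonneg_imp_has_sum)
  next
    show "(\<lambda>n. a n * t ^ n) summable_on UNIV"
      using at_summable[OF t0 t1] a_nonneg t0 by (subst summable_on_UNIV_nonneg_real_iff) auto
  qed (use p_nonneg t0 in auto)
  thus ?thesis by (simp add: case_prod_unfold)
qed

lemma sum_S:
  assumes S0: "S \<ge> 0"
  shows "(\<lambda>(n,m). p (n,m) * S ^ m) summable_on UNIV"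
proof -
  have "(\<lambda>x. p (snd x, fst x) * S ^ fst x) summable_on Sigma UNIV (\<lambda>_. UNIV)"
  proof (rule summable_on_SigmaI)
    fix m :: nat
    have "(\<lambda>n. p (n,m) * S ^ m) sums (b m * S ^ m)"
      unfolding b_def by (intro sums_mult2 summable_sums row_summable)
    thus "((\<lambda>n. p (snd (m, n), fst (m, n)) * S ^ fst (m, n)) has_sum b m * S ^ m) UNIV"
      using p_nonneg S0 by (auto intro!: sums_nonneg_imp_has_sum)
  next
    show "(\<lambda>m. b m * S ^ m) summable_on UNIV"
      using bW_summable[OF S0] b_nonneg S0 by (subst summable_on_UNIV_nonneg_real_iff) auto
  qed (use p_nonneg S0 in auto)
  hence "(\<lambda>x. p (snd x, fst x) * S ^ fst x) summable_on UNIV \<times> UNIV" by simp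
  hence "(\<lambda>(x,y). p (y, x) * S ^ x) summable_on UNIV \<times> UNIV" by (simp add: case_prod_unfold)
  hence "(\<lambda>(n,m). p (n,m) * S ^ m) summable_on UNIV \<times> UNIV"
    by (subst summable_on_swap) (simp add: case_prod_unfold)
  thus ?thesis by simp
qed

lemma main_summable:
  fixes u v :: complex
  assumes u: "norm u < 1 / (\<alpha> / \<mu>)"
  shows "(\<lambda>(n,m). complex_of_real (p (n,m)) * u ^ n * v ^ m) summable_on UNIV"
proof -
  define r where "r = norm u"
  define t where "t = (max r 1 + \<mu> / \<alpha>) / 2"
  have mua: "\<mu> / \<alpha> > 1" using rho pos by (simp add: field_simps)
  have ur: "r < \<mu> / \<alpha>" using u by (simp add: r_def)
  have rt: "max r 1 < t" using ur mua by (simp add: t_def)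
  have t0: "t \<ge> 0" using rt by linarith
  have "max r 1 < \<mu> / \<alpha>" using ur mua by simp
  moreover have "\<And>x y::real. x < y \<Longrightarrow> (x + y) / 2 < y" by (simp add: field_simps)
  ultimately have tl: "t < \<mu> / \<alpha>" unfolding t_def by blast
  have t1: "(\<alpha> / \<mu>) * t < 1" using tl pos by (simp add: field_simps)
  obtain S where S0: "S \<ge> 0" and S: "\<And>n m. r ^ n * norm v ^ m \<le> t ^ n + S ^ m"
    using pow_split_bound[OF _ rt, of "norm v"] by (auto simp: r_def)
  have "(\<lambda>x. norm ((\<lambda>(n,m). complex_of_real (p (n,m)) * u ^ n * v ^ m) x)) summable_on UNIV"
  proof (rule summable_on_comparison_test)
    show "(\<lambda>x. (\<lambda>(n,m). p (n,m) * t ^ n) x + (\<lambda>(n,m). p (n,m) * S ^ m) x) summable_on UNIV"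
      by (intro summable_on_add sum_t sum_S t0 t1 S0)
  next
    fix x :: "nat \<times> nat"
    obtain n m where x: "x = (n, m)" by (cases x)
    have "norm (complex_of_real (p (n,m)) * u ^ n * v ^ m) = p (n,m) * (r ^ n * norm v ^ m)"
      using p_nonneg by (simp add: norm_mult norm_power r_def)
    also have "\<dots> \<le> p (n,m) * (t ^ n + S ^ m)" using S p_nonneg by (intro mult_left_mono) auto
    finally show "norm ((\<lambda>(n,m). complex_of_real (p (n,m)) * u ^ n * v ^ m) x) \<le>
      (\<lambda>(n,m). p (n,m) * t ^ n) x + (\<lambda>(n,m). p (n,m) * S ^ m) x"
      by (simp add: x algebra_simps)
  qed auto
  thus ?thesis by (rule abs_summable_summable)
qed

end



lemma holo_aux:
  fixes g :: "nat \<times> nat \<Rightarrow> complex" and R :: ereal and v :: complex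
  assumes sm: "\<And>u. ereal (norm u) < R \<Longrightarrow> (\<lambda>(n,m). g (n,m) * u ^ n * v ^ m) summable_on UNIV"
  shows "(\<lambda>u. \<Sum>\<^sub>\<infinity>(n,m)\<in>UNIV. g (n,m) * u ^ n * v ^ m) holomorphic_on eball 0 R"
proof -
  define c where "c n = (\<Sum>\<^sub>\<infinity>m\<in>UNIV. g (n,m) * v ^ m)" for n
  have key: "summable (\<lambda>n. c n * u ^ n) \<and> (\<Sum>\<^sub>\<infinity>(n,m)\<in>UNIV. g (n,m) * u ^ n * v ^ m) = (\<Sum>n. c n * u ^ n)"
    if u: "ereal (norm u) < R" for u
  proof -
    define f where "f n m = g (n,m) * u ^ n * v ^ m" for n m
    have sAB: "(\<lambda>(n,m). f n m) summable_on Sigma UNIV (\<lambda>_. UNIV)"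
      using sm[OF u] by (simp add: f_def)
    have fc: "infsum (f n) UNIV = c n * u ^ n" for n
    proof -
      have "f n = (\<lambda>m. g (n,m) * v ^ m * u ^ n)"
        by (simp add: f_def algebra_simps fun_eq_iff)
      hence "infsum (f n) UNIV = infsum (\<lambda>m. g (n,m) * v ^ m * u ^ n) UNIV" by simp
      also have "\<dots> = c n * u ^ n" by (simp add: infsum_cmult_left' c_def)
      finally show ?thesis .
    qed
    have e1: "infsum (\<lambda>n. c n * u ^ n) UNIV = infsum (\<lambda>(n,m). f n m) (Sigma UNIV (\<lambda>_. UNIV))"
      using infsum_Sigma'_banach[OF sAB] fc by simp
    have s1: "(\<lambda>n. c n * u ^ n) summable_on UNIV"
      using summable_on_Sigma_banach[OF sAB] fc by simp
    have "(\<lambda>n. c n * u ^ n) sums infsum (\<lambda>n. c n * u ^ n) UNIV"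
      by (rule has_sum_imp_sums[OF has_sum_infsum[OF s1]])
    hence "summable (\<lambda>n. c n * u ^ n)" "(\<Sum>n. c n * u ^ n) = infsum (\<lambda>n. c n * u ^ n) UNIV"
      by (auto simp: sums_iff)
    thus ?thesis using e1 by (simp add: f_def)
  qed
  have cr: "conv_radius c \<ge> R"
  proof (rule conv_radius_geI_ex')
    fix r :: real assume "0 < r" "ereal r < R"
    thus "summable (\<lambda>n. c n * of_real r ^ n)" using key[of "of_real r"] by simp
  qed
  have "eval_fps (Abs_fps c) holomorphic_on eball 0 R"
    by (rule holomorphic_on_eval_fps) (use cr in \<open>auto simp: fps_conv_radius_def intro: eball_mono\<close>)
  thus ?thesis
    by (rule holomorphic_cong[THEN iffD1, rotated 2]) (use key in \<open>auto simp: eval_fps_def\<close>)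
qed

context psq begin

lemma holo_u: "(\<lambda>u. gen_fun p u v) holomorphic_on ball 0 (1 / (\<alpha> / \<mu>))"
proof -
  have "(\<lambda>u. \<Sum>\<^sub>\<infinity>(n,m)\<in>UNIV. complex_of_real (p (n,m)) * u ^ n * v ^ m) holomorphic_on eball 0 (ereal (1 / (\<alpha> / \<mu>)))"
    by (rule holo_aux) (use main_summable in auto)
  thus ?thesis by (simp add: gen_fun_def)
qed

lemma holo_v:
  assumes u: "norm u < 1 / (\<alpha> / \<mu>)"
  shows "(\<lambda>v. gen_fun p u v) holomorphic_on UNIV"
proof -
  have sw: "(\<lambda>(m,n). complex_of_real (p (n,m)) * v ^ m * u ^ n) summable_on UNIV" for v
  proof -
    have "(\<lambda>(n,m). complex_of_real (p (n,m)) * u ^ n * v ^ m) summable_on UNIV \<times> UNIV"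
      using main_summable[OF u] by simp
    hence "(\<lambda>(x,y). (\<lambda>(n,m). complex_of_real (p (n,m)) * u ^ n * v ^ m) (y,x)) summable_on UNIV \<times> UNIV"
      by (subst (asm) summable_on_swap)
    thus ?thesis by (simp add: case_prod_unfold algebra_simps)
  qed
  have eq: "gen_fun p u v = (\<Sum>\<^sub>\<infinity>(m,n)\<in>UNIV. complex_of_real (p (n,m)) * v ^ m * u ^ n)" for v
  proof -
    have "((\<lambda>(n,m). complex_of_real (p (n,m)) * u ^ n * v ^ m) has_sum gen_fun p u v) (UNIV \<times> UNIV)"
      using has_sum_infsum[OF main_summable[OF u]] by (simp add: gen_fun_def)
    hence "((\<lambda>(x,y). (\<lambda>(n,m). complex_of_real (p (n,m)) * u ^ n * v ^ m) (y,x)) has_sum gen_fun p u v) (UNIV \<times> UNIV)"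
      by (subst (asm) has_sum_swap)
    hence "((\<lambda>(m,n). complex_of_real (p (n,m)) * v ^ m * u ^ n) has_sum gen_fun p u v) UNIV"
      by (simp add: case_prod_unfold algebra_simps)
    thus ?thesis by (simp add: infsumI)
  qed
  have "(\<lambda>v. \<Sum>\<^sub>\<infinity>(m,n)\<in>UNIV. complex_of_real (p (n,m)) * v ^ m * u ^ n) holomorphic_on eball 0 \<infinity>"
    by (rule holo_aux[where g = "\<lambda>(m,n). complex_of_real (p (n,m))", simplified]) (use sw in auto)
  thus ?thesis using eq by simp
qed

end

theorem lemma1:
  fixes \<alpha> \<beta> \<mu> \<nu> \<theta> :: real and p :: "nat \<times> nat \<Rightarrow> real"
  assumes "\<alpha> > 0" "\<beta> > 0" "\<mu> > 0" "\<nu> > 0" "\<theta> > 0"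
    and "\<alpha> / \<mu> < 1"
    and "is_stationary_dist (ps_rate \<alpha> \<beta> \<mu> \<nu> \<theta>) p"
  shows "(\<forall>u v. norm u < 1 / (\<alpha> / \<mu>) \<longrightarrow>
            (\<lambda>(n,m). complex_of_real (p (n,m)) * u ^ n * v ^ m) summable_on UNIV)
       \<and> (\<forall>v. (\<lambda>u. gen_fun p u v) holomorphic_on ball 0 (1 / (\<alpha> / \<mu>)))
       \<and> (\<forall>u. norm u < 1 / (\<alpha> / \<mu>) \<longrightarrow> (\<lambda>v. gen_fun p u v) holomorphic_on UNIV)"
proof -
  interpret psq \<alpha> \<beta> \<mu> \<nu> \<theta> p using assms by unfold_locales
  show ?thesis using main_summable holo_u holo_v by blast
qed



end
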